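(* Let $K$ be an algebraically closed field and $\varphi:V\to V$ a $K$-linear map of a finite dimensional $K$-vector space $V$. Let $\{\lambda_1,\dots,\lambda_p\}\subseteq K$ be the set of all ($p$ distinct) eigenvalues of $\varphi$ and $m_i=\dim(\ker(\varphi-\lambda_i1_V))$. Then for each $1\le i\le p$ there exists a $K$-subalgebra $\mathcal M_i$ of the full matrix algebra $M_{m_i\times m_i}(K[t])$ such that the centralizer $C_\varphi=\{\psi\in\mathrm{Hom}_K(V,V)\mid\psi\circ\varphi=\varphi\circ\psi\}$ is a homomorphic image of the direct product $K$-algebra $\mathcal M_1\times\mathcal M_2\times\cdots\times\mathcal M_p$.
   Context: $K[t]$ is the polynomial ring over $K$ in one indeterminate. *)

theory Defs
  imports "HOL-Computational_Algebra.Polynomial" "Jordan_Normal_Form.Matrix"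
begin

definition mat_poly_subalgebra :: "nat \<Rightarrow> 'k::field poly mat set \<Rightarrow> bool" where
  "mat_poly_subalgebra m M \<longleftrightarrow>
     M \<subseteq> carrier_mat m m \<and> 1\<^sub>m m \<in> M \<and>
     (\<forall>A\<in>M. \<forall>B\<in>M. A + B \<in> M \<and> A * B \<in> M) \<and>
     (\<forall>c. \<forall>A\<in>M. [:c:] \<cdot>\<^sub>m A \<in> M)"

definition eigenvalues :: "('k::field \<Rightarrow> 'v::ab_group_add \<Rightarrow> 'v) \<Rightarrow> ('v \<Rightarrow> 'v) \<Rightarrow> 'k set" where
  "eigenvalues scale \<phi> = {\<mu>. \<exists>v. v \<noteq> 0 \<and> \<phi> v = scale \<mu> v}"

definition geom_mult :: "('k::field \<Rightarrow> 'v::ab_group_add \<Rightarrow> 'v) \<Rightarrow> ('v \<Rightarrow> 'v) \<Rightarrow> 'k \<Rightarrow> nat" where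
  "geom_mult scale \<phi> \<mu> = vector_space.dim scale {v. \<phi> v - scale \<mu> v = 0}"

definition centralizer :: "('k::field \<Rightarrow> 'v::ab_group_add \<Rightarrow> 'v) \<Rightarrow> ('v \<Rightarrow> 'v) \<Rightarrow> ('v \<Rightarrow> 'v) set" where
  "centralizer scale \<phi> = {\<psi>. Vector_Spaces.linear scale scale \<psi> \<and> \<psi> \<circ> \<phi> = \<phi> \<circ> \<psi>}"

end

theory Submission imports Defs "HOL-Computational_Algebra.Computational_Algebra" begin

locale lin_endo = vector_space scale for scale :: "'k::field \<Rightarrow> 'v::ab_group_add \<Rightarrow> 'v" (infixr "*s" 75) +
  fixes \<phi> :: "'v \<Rightarrow> 'v"
  assumes lin: "Vector_Spaces.linear scale scale \<phi>"
begin

sublocale L: Vector_Spaces.linear scale scale \<phi> by (rule lin)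

lemma linI:
  assumes "\<And>x y. f (x + y) = f x + f y" "\<And>c x. f (c *s x) = c *s f x"
  shows "Vector_Spaces.linear scale scale f"
  using assms vector_space_axioms by (simp add: Vector_Spaces.linear_iff)

lemma phi_add: "\<phi> (x + y) = \<phi> x + \<phi> y" by (rule L.add)
lemma phi_scale: "\<phi> (c *s x) = c *s \<phi> x" by (rule L.scale)
lemma phi_0: "\<phi> 0 = 0" by (rule L.zero)
lemma phi_sum: "\<phi> (\<Sum>i\<in>I. f i) = (\<Sum>i\<in>I. \<phi> (f i))" by (rule L.sum)

lemma phi_pow_lin: "Vector_Spaces.linear scale scale (\<phi> ^^ i)"
proof (induction i)
  case 0 show ?case by (simp add: linI)
next
  case (Suc i) show ?case using Vector_Spaces.linear_compose[OF Suc lin] by (simp add: o_def)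
qed

definition peval :: "'k poly \<Rightarrow> 'v \<Rightarrow> 'v" where
  "peval p v = (\<Sum>i\<le>degree p. coeff p i *s (\<phi> ^^ i) v)"

lemma peval_bound: "degree p \<le> n \<Longrightarrow> peval p v = (\<Sum>i\<le>n. coeff p i *s (\<phi> ^^ i) v)"
  unfolding peval_def
  by (rule sum.mono_neutral_left) (auto simp: coeff_eq_0)

lemma peval_add: "peval (p + q) v = peval p v + peval q v"
proof -
  let ?n = "max (degree p) (degree q)"
  have "peval (p + q) v = (\<Sum>i\<le>?n. coeff (p+q) i *s (\<phi> ^^ i) v)"
    by (rule peval_bound) (simp add: degree_add_le)
  also have "\<dots> = (\<Sum>i\<le>?n. coeff p i *s (\<phi> ^^ i) v) + (\<Sum>i\<le>?n. coeff q i *s (\<phi> ^^ i) v)"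
    by (simp add: scale_left_distrib sum.distrib)
  also have "\<dots> = peval p v + peval q v"
    by (simp add: peval_bound[of p ?n] peval_bound[of q ?n])
  finally show ?thesis .
qed

lemma peval_0[simp]: "peval 0 v = 0"
  by (simp add: peval_def)

lemma peval_smult: "peval (Polynomial.smult c p) v = c *s peval p v"
proof -
  have "peval (Polynomial.smult c p) v = (\<Sum>i\<le>degree p. coeff (Polynomial.smult c p) i *s (\<phi> ^^ i) v)"
    by (rule peval_bound) (simp add: degree_smult_le)
  also have "\<dots> = c *s peval p v"
    by (simp add: peval_def scale_sum_right)
  finally show ?thesis .
qed

lemma peval_const: "peval [:c:] v = c *s v"
  by (simp add: peval_def)

lemma peval_pCons0: "peval (pCons 0 p) v = \<phi> (peval p v)"
proof -
  have "peval (pCons 0 p) v = (\<Sum>i\<le>Suc (degree p). coeff (pCons 0 p) i *s (\<phi> ^^ i) v)"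
    by (rule peval_bound) (simp add: degree_pCons_le)
  also have "\<dots> = (\<Sum>i\<le>degree p. coeff p i *s (\<phi> ^^ Suc i) v)"
    by (subst sum.atMost_Suc_shift) simp
  also have "\<dots> = \<phi> (peval p v)"
    by (simp add: peval_def phi_sum phi_scale)
  finally show ?thesis .
qed

lemma peval_pCons: "peval (pCons a p) v = a *s v + \<phi> (peval p v)"
proof -
  have eq: "pCons a p = [:a:] + pCons 0 p" by simp
  have "peval (pCons a p) v = peval [:a:] v + peval (pCons 0 p) v"
    by (subst eq, rule peval_add)
  then show ?thesis by (simp add: peval_const peval_pCons0)
qed

lemma peval_vadd: "peval p (x + y) = peval p x + peval p y"
  by (induction p) (auto simp: peval_pCons scale_right_distrib phi_add algebra_simps)

lemma peval_vscale: "peval p (c *s x) = c *s peval p x"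
  by (induction p) (auto simp: peval_pCons scale_right_distrib phi_scale phi_add)

lemma peval_lin: "Vector_Spaces.linear scale scale (peval p)"
  by (rule linI) (auto simp: peval_vadd peval_vscale)

lemma peval_v0[simp]: "peval p 0 = 0"
  by (metis peval_vscale scale_zero_left)

lemma peval_mult: "peval (p * q) v = peval p (peval q v)"
proof (induction p)
  case 0 show ?case by simp
next
  case (pCons a p)
  have "peval (pCons a p * q) v = peval (Polynomial.smult a q) v + peval (pCons 0 (p * q)) v"
    by (simp add: peval_add)
  also have "\<dots> = a *s peval q v + \<phi> (peval p (peval q v))"
    by (simp add: peval_smult peval_pCons0 pCons.IH)
  also have "\<dots> = peval (pCons a p) (peval q v)" by (simp add: peval_pCons)
  finally show ?case .
qed

lemma peval_one[simp]: "peval 1 v = v"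
  using peval_const[of 1 v] by (simp add: one_pCons)

lemma peval_comm: "peval p (peval q v) = peval q (peval p v)"
  by (metis peval_mult mult.commute)

lemma peval_uminus: "peval (- p) v = - peval p v"
  using peval_add[of "-p" p v] by (simp add: eq_neg_iff_add_eq_0)

lemma peval_diff: "peval (p - q) v = peval p v - peval q v"
  using peval_add[of p "-q" v] by (simp add: peval_uminus)

lemma peval_psum: "peval (\<Sum>i\<in>I. p i) v = (\<Sum>i\<in>I. peval (p i) v)"
  by (induction I rule: infinite_finite_induct) (auto simp: peval_add)

lemma peval_vsum: "peval p (\<Sum>i\<in>I. f i) = (\<Sum>i\<in>I. peval p (f i))"
  by (induction I rule: infinite_finite_induct) (auto simp: peval_vadd)

lemma peval_vdiff: "peval p (x - y) = peval p x - peval p y"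
  by (metis add_diff_cancel peval_vadd diff_add_cancel add_diff_eq eq_diff_eq)

lemma peval_linear_factor: "peval [:- a, 1:] v = \<phi> v - a *s v"
  by (simp add: peval_pCons peval_const)

lemma peval_monom: "peval (monom c j) v = c *s (\<phi> ^^ j) v"
proof -
  have "peval (monom c j) v = (\<Sum>i\<le>j. coeff (monom c j) i *s (\<phi> ^^ i) v)"
    by (rule peval_bound) (simp add: degree_monom_le)
  also have "\<dots> = (\<Sum>i\<in>{j}. coeff (monom c j) i *s (\<phi> ^^ i) v)"
    by (rule sum.mono_neutral_right) (auto simp: coeff_monom)
  finally show ?thesis by simp
qed

lemma peval_eigen: "\<phi> w = a *s w \<Longrightarrow> peval p w = poly p a *s w"
  by (induction p) (auto simp: peval_pCons phi_scale scale_left_distrib)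

lemma peval_commute:
  assumes "Vector_Spaces.linear scale scale \<psi>" "\<psi> \<circ> \<phi> = \<phi> \<circ> \<psi>"
  shows "peval p (\<psi> v) = \<psi> (peval p v)"
proof -
  interpret P: Vector_Spaces.linear scale scale \<psi> by (rule assms(1))
  have c: "\<psi> (\<phi> x) = \<phi> (\<psi> x)" for x using assms(2) by (metis comp_apply)
  show ?thesis
    by (induction p) (auto simp: peval_pCons P.add P.scale c)
qed

end

locale fd_endo = lin_endo scale \<phi> + finite_dimensional_vector_space scale Basis
  for scale :: "'k::field \<Rightarrow> 'v::ab_group_add \<Rightarrow> 'v" (infixr "*s" 75) and \<phi> and Basis
begin

lemma vec_annih: "\<exists>p. p \<noteq> 0 \<and> peval p v = 0"
proof -
  define Q where "Q i = (\<lambda>p. peval p v) ` {p::'k poly. p = 0 \<or> degree p < i}" for i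
  have subQ: "subspace (Q i)" for i
    unfolding subspace_def
  proof (intro conjI ballI allI)
    show "0 \<in> Q i" unfolding Q_def by (rule image_eqI[of _ _ 0]) auto
  next
    fix x y assume "x \<in> Q i" "y \<in> Q i"
    then obtain p q where "x = peval p v" "y = peval q v" "p = 0 \<or> degree p < i" "q = 0 \<or> degree q < i"
      unfolding Q_def by auto
    then show "x + y \<in> Q i" unfolding Q_def
      by (intro image_eqI[of _ _ "p + q"])
        (auto simp: peval_add intro: le_less_trans[OF degree_add_le_max])
  next
    fix c x assume "x \<in> Q i"
    then obtain p where "x = peval p v" "p = 0 \<or> degree p < i"
      unfolding Q_def by auto
    then show "c *s x \<in> Q i" unfolding Q_def
      by (intro image_eqI[of _ _ "Polynomial.smult c p"])
        (auto simp: peval_smult intro: le_less_trans[OF degree_smult_le])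
  qed
  have memQ: "(\<phi> ^^ i) v \<in> Q (Suc i)" for i
    unfolding Q_def
    by (rule image_eqI[of _ _ "monom 1 i"]) (auto simp: peval_monom degree_monom_eq)
  have monoQ: "Q i \<subseteq> Q (Suc i)" for i
    unfolding Q_def by auto
  have "\<exists>i. (\<phi> ^^ i) v \<in> Q i"
  proof (rule ccontr)
    assume na: "\<not> (\<exists>i. (\<phi> ^^ i) v \<in> Q i)"
    have "i \<le> dim (Q i)" for i
    proof (induction i)
      case 0 show ?case by simp
    next
      case (Suc i)
      have "(\<phi> ^^ i) v \<notin> span (Q i)" using na span_eq_iff[of "Q i"] subQ[of i] by metis
      then have "dim (insert ((\<phi> ^^ i) v) (Q i)) = dim (Q i) + 1" by (simp add: dim_insert)
      moreover have "dim (insert ((\<phi> ^^ i) v) (Q i)) \<le> dim (Q (Suc i))"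
        using memQ monoQ by (intro dim_subset) auto
      ultimately show ?case using Suc by simp
    qed
    then have "Suc dimension \<le> dimension"
      using dim_subset_UNIV[of "Q (Suc dimension)"] by (meson le_trans)
    then show False by simp
  qed
  then obtain i q where iq: "(\<phi> ^^ i) v = peval q v" "q = 0 \<or> degree q < i"
    unfolding Q_def by auto
  have cq: "coeff q i = 0" using iq(2) by (auto simp: coeff_eq_0)
  define p where "p = monom 1 i - q"
  have "coeff p i = 1" using cq by (simp add: p_def)
  then have "p \<noteq> 0" by auto
  moreover have "peval p v = 0" using iq(1) by (simp add: p_def peval_diff peval_monom)
  ultimately show ?thesis by blast
qed

lemma annih: "\<exists>p. p \<noteq> 0 \<and> (\<forall>v. peval p v = 0)"
proof -
  obtain pv where pv: "\<And>v. pv v \<noteq> 0 \<and> peval (pv v) v = 0"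
    using vec_annih by metis
  define P where "P = (\<Prod>b\<in>Basis. pv b)"
  have "P \<noteq> 0" using pv finite_Basis by (simp add: P_def)
  moreover have "Basis \<subseteq> {v. peval P v = 0}"
  proof
    fix b assume b: "b \<in> Basis"
    have "P = (\<Prod>c\<in>Basis - {b}. pv c) * pv b"
      unfolding P_def using b finite_Basis by (simp add: prod.remove mult.commute)
    then show "b \<in> {v. peval P v = 0}" using pv[of b] by (simp add: peval_mult)
  qed
  then have "span Basis \<subseteq> {v. peval P v = 0}"
    by (intro span_minimal)
      (auto simp: subspace_def peval_vadd peval_vscale)
  ultimately show ?thesis using span_Basis by auto
qed

end

lemma poly_gcd_comb:
  fixes a b :: "'k::field poly"
  shows "\<exists>x y. (x*a + y*b) dvd a \<and> (x*a + y*b) dvd b"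
proof (induction "degree b" arbitrary: a b rule: less_induct)
  case less
  show ?case
  proof (cases "b = 0")
    case True
    then show ?thesis by (intro exI[of _ 1] exI[of _ 0]) simp
  next
    case b: False
    show ?thesis
    proof (cases "a mod b = 0")
      case True
      then show ?thesis by (intro exI[of _ 0] exI[of _ 1]) auto
    next
      case False
      have "degree (a mod b) < degree b" by (rule degree_mod_less'[OF b False])
      from less[OF this, of b] obtain x y where
        xy: "(x*b + y*(a mod b)) dvd b" "(x*b + y*(a mod b)) dvd (a mod b)" by blast
      have amod: "a mod b = a - (a div b) * b" by (simp add: minus_div_mult_eq_mod)
      have eq: "x*b + y*(a mod b) = y*a + (x - y*(a div b))*b"
        by (simp add: amod algebra_simps)
      have "(x*b + y*(a mod b)) dvd a"
      proof -
        have "a = (a div b) * b + a mod b" by simp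
        then show ?thesis using xy by (metis dvd_add dvd_mult)
      qed
      then show ?thesis using xy(1) eq by (intro exI[of _ y] exI[of _ "x - y*(a div b)"]) simp
    qed
  qed
qed

lemma bezout_noroot:
  fixes a b :: "'k::alg_closed_field poly"
  assumes "\<And>c. poly a c \<noteq> 0 \<or> poly b c \<noteq> 0"
  shows "\<exists>x y. x*a + y*b = 1"
proof -
  obtain x y where xy: "(x*a + y*b) dvd a" "(x*a + y*b) dvd b"
    using poly_gcd_comb by blast
  define d where "d = x*a + y*b"
  have "degree d = 0"
  proof (rule ccontr)
    assume "degree d \<noteq> 0"
    then obtain c where "poly d c = 0" using alg_closed_imp_poly_has_root by blast
    then have "[:-c,1:] dvd d" by (simp add: poly_eq_0_iff_dvd)
    then have "[:-c,1:] dvd a" "[:-c,1:] dvd b" using xy dvd_trans unfolding d_def by blast+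
    then have "poly a c = 0" "poly b c = 0" by (simp_all add: poly_eq_0_iff_dvd)
    then show False using assms by auto
  qed
  then obtain c where dc: "d = [:c:]" by (auto elim: degree_eq_zeroE)
  have "c \<noteq> 0"
  proof
    assume "c = 0"
    then have "a = 0" "b = 0" using xy dc unfolding d_def by auto
    then show False using assms[of 0] by simp
  qed
  then have "Polynomial.smult (inverse c) d = 1"
    using dc by simp
  then have "Polynomial.smult (inverse c) x * a + Polynomial.smult (inverse c) y * b = 1"
    unfolding d_def by (simp add: smult_add_right)
  then show ?thesis by blast
qed

lemma dvd_mult_noroot:
  fixes a b :: "'k::alg_closed_field poly"
  assumes "a dvd X" "b dvd X" "\<And>c. poly a c \<noteq> 0 \<or> poly b c \<noteq> 0"
  shows "a * b dvd X"
proof -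
  obtain x y where xy: "x*a + y*b = 1" using bezout_noroot assms(3) by blast
  have "X = (x*a + y*b)*X" using xy by simp
  also have "\<dots> = x*a*X + y*b*X" by (simp add: distrib_right)
  finally have X: "X = x*a*X + y*b*X" .
  obtain t where t: "X = b*t" using assms(2) by (elim dvdE)
  obtain u where u: "X = a*u" using assms(1) by (elim dvdE)
  have "x*a*X = (a*b)*(x*t)" by (subst t) (simp add: ac_simps)
  moreover have "y*b*X = (a*b)*(y*u)" by (subst u) (simp add: ac_simps)
  ultimately have "a*b dvd x*a*X + y*b*X" by (metis dvd_add dvd_triv_left)
  then show ?thesis using X by simp
qed

lemma prod_dvd_noroot:
  fixes q :: "'a \<Rightarrow> 'k::alg_closed_field poly"
  assumes "finite S" "\<And>i. i \<in> S \<Longrightarrow> q i dvd X"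
    and "\<And>i j c. i \<in> S \<Longrightarrow> j \<in> S \<Longrightarrow> i \<noteq> j \<Longrightarrow> poly (q i) c \<noteq> 0 \<or> poly (q j) c \<noteq> 0"
  shows "(\<Prod>i\<in>S. q i) dvd X"
  using assms
proof (induction S rule: finite_induct)
  case empty then show ?case by simp
next
  case (insert x F)
  have "poly (q x) c \<noteq> 0 \<or> poly (\<Prod>i\<in>F. q i) c \<noteq> 0" for c
  proof (cases "poly (q x) c = 0")
    case True
    have "poly (q i) c \<noteq> 0" if "i \<in> F" for i
      using insert.prems(2)[of x i c] insert.hyps(2) that True by auto
    then show ?thesis by (simp add: poly_prod insert.hyps)
  qed simp
  moreover have "(\<Prod>i\<in>F. q i) dvd X" using insert by auto
  ultimately show ?case using insert by (simp add: dvd_mult_noroot)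
qed

context fd_endo
begin

abbreviation "E \<equiv> {\<mu>. \<exists>v. v \<noteq> 0 \<and> \<phi> v = \<mu> *s v}"

lemma not_eigen_pow:
  assumes "\<mu> \<notin> E" "peval ([:-\<mu>,1:]^n) w = 0"
  shows "w = 0"
  using assms(2)
proof (induction n arbitrary: w)
  case 0 then show ?case by simp
next
  case (Suc n)
  let ?u = "peval ([:-\<mu>,1:]^n) w"
  have "peval ([:-\<mu>,1:]^Suc n) w = \<phi> ?u - \<mu> *s ?u"
    by (simp only: power_Suc peval_mult peval_linear_factor)
  then have "\<phi> ?u = \<mu> *s ?u" using Suc.prems by simp
  then have "?u = 0" using assms(1) by auto
  then show ?case using Suc.IH by simp
qed

end



context lin_endo
begin

lemma lin_add: "Vector_Spaces.linear scale scale f \<Longrightarrow> f (x + y) = f x + f y"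
  by (simp add: Vector_Spaces.linear_iff)
lemma lin_scale: "Vector_Spaces.linear scale scale f \<Longrightarrow> f (c *s x) = c *s f x"
  by (simp add: Vector_Spaces.linear_iff)
lemma lin_0: "Vector_Spaces.linear scale scale f \<Longrightarrow> f 0 = 0"
  using lin_scale[of f 0 0] by simp
lemma lin_sum: "Vector_Spaces.linear scale scale f \<Longrightarrow> f (\<Sum>i\<in>I. g i) = (\<Sum>i\<in>I. f (g i))"
  by (induction I rule: infinite_finite_induct) (auto simp: lin_0 lin_add)

definition Gam :: "'v list \<Rightarrow> nat \<Rightarrow> 'k poly vec \<Rightarrow> 'v" where
  "Gam u m x = (\<Sum>j<m. peval (x $ j) (u ! j))"

lemma Gam_add: "x \<in> carrier_vec m \<Longrightarrow> y \<in> carrier_vec m \<Longrightarrow> Gam u m (x + y) = Gam u m x + Gam u m y"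
  unfolding Gam_def by (simp add: peval_add sum.distrib)

lemma Gam_smult: "y \<in> carrier_vec m \<Longrightarrow> Gam u m ([:c:] \<cdot>\<^sub>v y) = c *s Gam u m y"
  unfolding Gam_def by (simp add: peval_smult scale_sum_right)

lemma Gam_col:
  assumes A: "A \<in> carrier_mat m m" and x: "x \<in> carrier_vec m"
  shows "Gam u m (A *\<^sub>v x) = (\<Sum>k<m. peval (x $ k) (Gam u m (col A k)))"
proof -
  have "Gam u m (A *\<^sub>v x) = (\<Sum>j<m. peval (\<Sum>i\<in>{0..<m}. A $$ (j,i) * x $ i) (u ! j))"
    unfolding Gam_def using A x by (intro sum.cong) (auto simp: scalar_prod_def)
  also have "\<dots> = (\<Sum>j<m. \<Sum>i<m. peval (x $ i) (peval (A $$ (j,i)) (u ! j)))"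
    by (simp add: peval_psum peval_mult atLeast0LessThan mult.commute)
  also have "\<dots> = (\<Sum>i<m. \<Sum>j<m. peval (x $ i) (peval (A $$ (j,i)) (u ! j)))"
    by (rule sum.swap)
  also have "\<dots> = (\<Sum>k<m. peval (x $ k) (Gam u m (col A k)))"
    unfolding Gam_def using A by (intro sum.cong) (auto simp: peval_vsum)
  finally show ?thesis .
qed

lemma Gam_commute:
  assumes "Vector_Spaces.linear scale scale \<psi>" "\<psi> \<circ> \<phi> = \<phi> \<circ> \<psi>"
  shows "\<psi> (Gam u m x) = (\<Sum>j<m. peval (x $ j) (\<psi> (u ! j)))"
  unfolding Gam_def using assms by (simp add: lin_sum peval_commute)

end

context fd_endo
begin

lemma rank_nullity_le:
  assumes lf: "Vector_Spaces.linear scale scale f" and sub: "{v. f v = 0} \<subseteq> W"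
  shows "dim W \<le> dim (f ` W) + dim {v. f v = 0}"
proof -
  interpret F: Vector_Spaces.linear scale scale f by (rule lf)
  obtain Bn where Bn: "Bn \<subseteq> f ` W" "independent Bn" "f ` W \<subseteq> span Bn" "card Bn = dim (f ` W)"
    using basis_exists by blast
  obtain Bk where Bk: "Bk \<subseteq> {v. f v = 0}" "independent Bk" "{v. f v = 0} \<subseteq> span Bk" "card Bk = dim {v. f v = 0}"
    using basis_exists by blast
  have "\<forall>b\<in>Bn. \<exists>w\<in>W. f w = b" using Bn(1) by auto
  then obtain pre where pre: "\<And>b. b \<in> Bn \<Longrightarrow> pre b \<in> W \<and> f (pre b) = b" by metis
  have finBn: "finite Bn" using Bn(2) by (rule finiteI_independent)
  have finBk: "finite Bk" using Bk(2) by (rule finiteI_independent)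
  have fP: "f ` (pre ` Bn) = Bn" using pre by (force simp: image_image)
  have "W \<subseteq> span (pre ` Bn \<union> Bk)"
  proof
    fix w assume w: "w \<in> W"
    then have "f w \<in> span Bn" using Bn(3) by auto
    then have "f w \<in> f ` span (pre ` Bn)" using F.span_image[of "pre ` Bn"] fP by simp
    then obtain x where x: "x \<in> span (pre ` Bn)" "f w = f x" by auto
    have "f (w - x) = 0" using x(2) by (simp add: F.diff)
    then have "w - x \<in> span Bk" using Bk(3) by auto
    then have "x + (w - x) \<in> span (pre ` Bn \<union> Bk)"
      using x(1) by (meson span_add span_mono subsetD sup_ge1 sup_ge2)
    then show "w \<in> span (pre ` Bn \<union> Bk)" by simp
  qed
  then have "dim W \<le> card (pre ` Bn \<union> Bk)"
    using finBn finBk by (intro dim_le_card) auto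
  also have "\<dots> \<le> card (pre ` Bn) + card Bk" by (rule card_Un_le)
  also have "\<dots> \<le> card Bn + card Bk" using card_image_le[OF finBn] by simp
  finally show ?thesis using Bn(4) Bk(4) by simp
qed

lemma generators:
  fixes l :: 'k and k :: nat
  assumes k: "k \<ge> 1"
  defines "W \<equiv> {w. peval ([:-l,1:]^k) w = 0}"
  defines "m \<equiv> dim {v. \<phi> v - l *s v = 0}"
  obtains u :: "'v list" where "length u = m" "set u \<subseteq> W"
    "\<And>w. w \<in> W \<Longrightarrow> \<exists>c. w = (\<Sum>j<m. peval (c j) (u ! j))"
proof -
  define p where "p = [:-l, 1::'k:]"
  define N where "N = peval p"
  have Nlin: "Vector_Spaces.linear scale scale N" unfolding N_def by (rule peval_lin)
  interpret NL: Vector_Spaces.linear scale scale N by (rule Nlin)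
  have KN: "{v. \<phi> v - l *s v = 0} = {v. N v = 0}"
    by (simp add: N_def p_def peval_linear_factor)
  have Wsub: "subspace W" unfolding W_def
    by (auto simp: subspace_def peval_vadd peval_vscale)
  have KW: "{v. N v = 0} \<subseteq> W"
  proof
    fix v assume "v \<in> {v. N v = 0}"
    then have "N v = 0" by simp
    obtain k' where k': "k = Suc k'" using k by (cases k) auto
    have "p^k = p^k' * p" unfolding k' by (rule power_Suc2)
    then show "v \<in> W" using \<open>N v = 0\<close> unfolding W_def N_def p_def[symmetric]
      by (simp add: peval_mult)
  qed
  have NW: "N ` W \<subseteq> W"
  proof
    fix y assume "y \<in> N ` W"
    then obtain w where w: "w \<in> W" "y = N w" by auto
    have "peval ([:-l,1:]^k) (peval [:-l,1:] w) = peval [:-l,1:] (peval ([:-l,1:]^k) w)"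
      by (rule peval_comm)
    then show "y \<in> W" using w unfolding W_def N_def p_def by simp
  qed
  have NWsub: "subspace (N ` W)" using NL.subspace_image[OF Wsub] .
  have rn: "dim W \<le> dim (N ` W) + m"
    unfolding m_def KN by (rule rank_nullity_le[OF Nlin KW])
  obtain B1 where B1: "B1 \<subseteq> N ` W" "independent B1" "N ` W \<subseteq> span B1" "card B1 = dim (N ` W)"
    using basis_exists by blast
  obtain B where B: "B1 \<subseteq> B" "B \<subseteq> W" "independent B" "W \<subseteq> span B"
    using maximal_independent_subset_extend[of B1 W] B1(1,2) NW by blast
  have finB: "finite B" using B(3) by (rule finiteI_independent)
  have cardB: "card B = dim W" using basis_card_eq_dim[OF B(2,4,3)] .
  define C where "C = B - B1"
  have cardC: "card C \<le> m"
    using card_Diff_subset[OF finite_subset[OF B(1) finB] B(1)] cardB B1(4) rn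
    unfolding C_def by linarith
  have finC: "finite C" using finB by (simp add: C_def)
  have span_B1: "span B1 \<subseteq> N ` W" using span_minimal[OF B1(1) NWsub] .
  have Wdec: "\<exists>x y. w = x + y \<and> x \<in> span C \<and> y \<in> N ` W" if wW: "w \<in> W" for w
  proof -
    have "B = C \<union> B1" using B(1) by (auto simp: C_def)
    then have "w \<in> span (C \<union> B1)" using B(4) wW by auto
    then show ?thesis using span_B1 unfolding span_Un by blast
  qed
  obtain cs where cs: "set cs = C" "distinct cs" using finite_distinct_list[OF finC] by blast
  have lcs: "length cs \<le> m" using cardC cs distinct_card by fastforce
  define u where "u = cs @ replicate (m - length cs) 0"
  have lu: "length u = m" using lcs by (simp add: u_def)
  have setu: "set u \<subseteq> C \<union> {0}" by (auto simp: u_def cs)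
  have CW: "C \<subseteq> W" using B(2) by (auto simp: C_def)
  have uW: "set u \<subseteq> W" using setu CW Wsub subspace_0 by auto
  define G where "G = {x. \<exists>c. x = (\<Sum>j<m. peval (c j) (u ! j))}"
  have G_peval: "peval q x \<in> G" if xG: "x \<in> G" for q x
  proof -
    obtain c where "x = (\<Sum>j<m. peval (c j) (u ! j))" using xG by (auto simp: G_def)
    then have "peval q x = (\<Sum>j<m. peval (q * c j) (u ! j))"
      by (simp add: peval_vsum peval_mult)
    then show ?thesis by (auto simp: G_def)
  qed
  have Gsub: "subspace G"
    unfolding subspace_def
  proof (intro conjI ballI allI)
    show "0 \<in> G" unfolding G_def by (intro CollectI exI[of _ "\<lambda>_. 0"]) simp
  next
    fix x y assume "x \<in> G" "y \<in> G"
    then obtain c d where "x = (\<Sum>j<m. peval (c j) (u ! j))" "y = (\<Sum>j<m. peval (d j) (u ! j))"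
      by (auto simp: G_def)
    then have "x + y = (\<Sum>j<m. peval (c j + d j) (u ! j))"
      by (simp add: peval_add sum.distrib)
    then show "x + y \<in> G" by (auto simp: G_def)
  next
    fix a x assume "x \<in> G"
    then have "peval [:a:] x \<in> G" by (rule G_peval)
    then show "a *s x \<in> G" by (simp add: peval_const)
  qed
  have uG: "set u \<subseteq> G"
  proof
    fix y assume "y \<in> set u"
    then obtain i where i: "i < m" "y = u ! i" using lu by (auto simp: in_set_conv_nth)
    have e: "peval (if j = i then 1 else 0) (u ! j) = (if j = i then u ! j else 0)" for j
      by simp
    have "(\<Sum>j<m. peval (if j = i then 1 else 0) (u ! j)) = u ! i"
      unfolding e using i(1) by (simp add: sum.delta)
    then show "y \<in> G" unfolding G_def using i(2) by (intro CollectI exI[of _ "\<lambda>j. if j = i then 1 else 0"]) simp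
  qed
  have CG: "span C \<subseteq> G"
  proof (rule span_minimal[OF _ Gsub])
    show "C \<subseteq> G" using uG by (auto simp: u_def cs)
  qed
  have step: "\<forall>w\<in>W. \<exists>g w'. w = g + peval (p^i) w' \<and> g \<in> G \<and> w' \<in> W" for i
  proof (induction i)
    case 0
    show ?case
    proof
      fix w assume "w \<in> W"
      then show "\<exists>g w'. w = g + peval (p^0) w' \<and> g \<in> G \<and> w' \<in> W"
        using subspace_0[OF Gsub] by (intro exI[of _ 0] exI[of _ w]) simp
    qed
  next
    case (Suc i)
    show ?case
    proof
      fix w assume "w \<in> W"
      then obtain g w' where gw: "w = g + peval (p^i) w'" "g \<in> G" "w' \<in> W" using Suc by blast
      obtain x y where xy: "w' = x + y" "x \<in> span C" "y \<in> N ` W" using Wdec[OF gw(3)] by blast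
      obtain w'' where w'': "w'' \<in> W" "y = N w''" using xy(3) by auto
      have "peval (p^i) w' = peval (p^i) x + peval (p^Suc i) w''"
        using xy w'' peval_comm[of "p^i" p w''] by (simp add: peval_vadd N_def peval_mult)
      then have "w = (g + peval (p^i) x) + peval (p^Suc i) w''" using gw(1) by (simp add: add.assoc)
      moreover have "g + peval (p^i) x \<in> G"
        using gw(2) G_peval[of x] CG xy(2) subspace_add[OF Gsub] by blast
      ultimately show "\<exists>g w'. w = g + peval (p^Suc i) w' \<and> g \<in> G \<and> w' \<in> W"
        using w''(1) by blast
    qed
  qed
  have WG: "W \<subseteq> G"
  proof
    fix w assume "w \<in> W"
    then obtain g w' where "w = g + peval (p^k) w'" "g \<in> G" "w' \<in> W" using step[of k] by blast
    then show "w \<in> G" by (simp add: W_def p_def)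
  qed
  show ?thesis
    by (rule that[OF lu uW]) (use WG in \<open>auto simp: G_def\<close>)
qed

end

lemma prod_mset_count: "(\<Prod>x\<in>#A. f x) = (\<Prod>x\<in>set_mset A. (f x :: 'a::comm_monoid_mult) ^ count A x)"
proof (induction A)
  case empty then show ?case by simp
next
  case (add a A)
  show ?case
  proof (cases "a \<in># A")
    case True
    have "(\<Prod>x\<in>set_mset A. f x ^ count (add_mset a A) x) = f a * (\<Prod>x\<in>set_mset A. f x ^ count A x)"
      using True
      by (simp add: prod.remove[of "set_mset A" a] mult.assoc del: prod.insert_remove)
       (smt (verit) DiffE count_add_mset insertCI mult.commute prod.cong singletonD)
    then show ?thesis using add True by (simp add: insert_absorb)
  next
    case False
    have "(\<Prod>x\<in>set_mset A. f x ^ count (add_mset a A) x) = (\<Prod>x\<in>set_mset A. f x ^ count A x)"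
      using False by (intro prod.cong) auto
    then show ?thesis using add False by (simp add: not_in_iff)
  qed
qed

locale ac_endo = fd_endo scale \<phi> Basis
  for scale :: "'k::alg_closed_field \<Rightarrow> 'v::ab_group_add \<Rightarrow> 'v" (infixr "*s" 75) and \<phi> and Basis
begin

lemma decomp:
  obtains k :: "'k \<Rightarrow> nat" and e :: "'k \<Rightarrow> 'k poly" where
   "finite E"
   "\<And>l. l \<in> E \<Longrightarrow> k l \<ge> 1"
   "\<And>l v. l \<in> E \<Longrightarrow> peval ([:-l,1:]^k l) (peval (e l) v) = 0"
   "\<And>l \<mu> w. l \<in> E \<Longrightarrow> \<mu> \<in> E \<Longrightarrow> \<mu> \<noteq> l \<Longrightarrow> peval ([:-l,1:]^k l) w = 0 \<Longrightarrow> peval (e \<mu>) w = 0"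
   "\<And>l w. l \<in> E \<Longrightarrow> peval ([:-l,1:]^k l) w = 0 \<Longrightarrow> peval (e l) w = w"
   "\<And>v. (\<Sum>l\<in>E. peval (e l) v) = v"
proof -
  obtain P where P: "P \<noteq> 0" "\<And>v. peval P v = 0" using annih by blast
  obtain A where A: "P = Polynomial.smult (lead_coeff P) (\<Prod>x\<in>#A. [:-x,1:])"
    using alg_closed_imp_factorization[OF P(1)] by blast
  define R where "R = set_mset A"
  define k where "k l = count A l" for l
  define q where "q l = [:-l,1:]^k l" for l
  define P' where "P' = (\<Prod>l\<in>R. q l)"
  have finR: "finite R" by (simp add: R_def)
  have P'eq: "(\<Prod>x\<in>#A. [:-x,1:]) = P'"
    unfolding P'_def R_def q_def k_def by (rule prod_mset_count)
  have lc: "lead_coeff P \<noteq> 0" using P(1) by simp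
  have P'0: "peval P' v = 0" for v
    using P(2)[of v] A P'eq lc by (metis peval_smult scale_eq_0_iff)
  have kpos: "k l \<ge> 1" if "l \<in> R" for l
    using that by (simp add: R_def k_def Suc_le_eq)
  have polyq: "poly (q l) c = 0 \<longleftrightarrow> c = l \<and> l \<in> R" for l c
    by (auto simp: q_def k_def R_def)
  have ER: "E \<subseteq> R"
  proof
    fix \<mu> assume "\<mu> \<in> E"
    then obtain v where v: "v \<noteq> 0" "\<phi> v = \<mu> *s v" by auto
    have "poly P' \<mu> *s v = 0" using peval_eigen[OF v(2), of P'] P'0[of v] by simp
    then have "poly P' \<mu> = 0" using v(1) by simp
    then obtain l where "l \<in> R" "poly (q l) \<mu> = 0"
      unfolding P'_def poly_prod using finR by (auto simp: prod_zero_iff)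
    then show "\<mu> \<in> R" using polyq by auto
  qed
  have finE: "finite E" using finite_subset[OF ER finR] .
  define r where "r l = (\<Prod>\<mu>\<in>R-{l}. q \<mu>)" for l
  have qr: "q l * r l = P'" if "l \<in> R" for l
    unfolding P'_def r_def using that finR by (simp add: prod.remove)
  have "\<exists>a b. a * r l + b * q l = 1" if "l \<in> R" for l
  proof (rule bezout_noroot)
    fix c
    show "poly (r l) c \<noteq> 0 \<or> poly (q l) c \<noteq> 0"
    proof (cases "poly (q l) c = 0")
      case True
      then have "c = l" using polyq by auto
      then have "poly (r l) c \<noteq> 0" unfolding r_def poly_prod using finR polyq
        by (auto simp: prod_zero_iff)
      then show ?thesis by simp
    qed simp
  qed
  then obtain a b where ab: "\<And>l. l \<in> R \<Longrightarrow> a l * r l + b l * q l = 1"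
    by metis
  define e where "e l = a l * r l" for l
  have D3: "peval (q l) (peval (e l) v) = 0" if "l \<in> R" for l v
  proof -
    have "q l * e l = a l * P'" using qr[OF that] by (simp add: e_def ac_simps)
    then show ?thesis by (metis peval_mult P'0 peval_v0)
  qed
  have D4: "peval (e \<mu>) w = 0" if "l \<in> R" "\<mu> \<in> R" "\<mu> \<noteq> l" "peval (q l) w = 0" for l \<mu> w
  proof -
    have "q l dvd r \<mu>" unfolding r_def using that finR by (intro dvd_prodI) auto
    then obtain t where "r \<mu> = q l * t" by (elim dvdE)
    then have "e \<mu> = (a \<mu> * t) * q l" by (simp add: e_def ac_simps)
    then show ?thesis using that(4) by (simp add: peval_mult)
  qed
  have D5: "peval (e l) w = w" if "l \<in> R" "peval (q l) w = 0" for l w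
  proof -
    have "e l = 1 - b l * q l" using ab[OF that(1)] by (simp add: e_def algebra_simps)
    then show ?thesis using that(2) by (simp add: peval_diff peval_mult)
  qed
  define X where "X = 1 - (\<Sum>l\<in>R. e l)"
  have "q \<mu> dvd X" if "\<mu> \<in> R" for \<mu>
  proof -
    have "(\<Sum>l\<in>R. e l) = e \<mu> + (\<Sum>l\<in>R-{\<mu>}. e l)"
      using that finR by (simp add: sum.remove)
    then have X: "X = b \<mu> * q \<mu> - (\<Sum>l\<in>R-{\<mu>}. e l)"
      using ab[OF that] unfolding X_def e_def by (simp add: algebra_simps)
    have "q \<mu> dvd e l" if "l \<in> R-{\<mu>}" for l
      unfolding e_def r_def using that \<open>\<mu> \<in> R\<close> finR
      by (intro dvd_mult dvd_prodI) auto
    then have "q \<mu> dvd (\<Sum>l\<in>R-{\<mu>}. e l)" by (intro dvd_sum) auto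
    then show ?thesis unfolding X by (intro dvd_diff) auto
  qed
  then have "P' dvd X" unfolding P'_def
  proof (intro prod_dvd_noroot[OF finR])
    fix i j c assume "i \<in> R" "j \<in> R" "i \<noteq> j"
    then show "poly (q i) c \<noteq> 0 \<or> poly (q j) c \<noteq> 0" using polyq by auto
  qed
  then obtain Y where "X = P' * Y" by (elim dvdE)
  then have X0: "peval X v = 0" for v by (simp add: peval_mult P'0 mult.commute[of P'])
  have sumR: "(\<Sum>l\<in>R. peval (e l) v) = v" for v
    using X0[of v] unfolding X_def by (simp add: peval_diff peval_psum)
  have sumE: "(\<Sum>l\<in>E. peval (e l) v) = v" for v
  proof -
    have "(\<Sum>l\<in>E. peval (e l) v) = (\<Sum>l\<in>R. peval (e l) v)"
    proof (rule sum.mono_neutral_left[OF finR ER], rule ballI)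
      fix l assume "l \<in> R - E"
      then show "peval (e l) v = 0"
        using not_eigen_pow[of l "k l" "peval (e l) v"] D3[of l v] unfolding q_def by blast
    qed
    then show ?thesis using sumR by simp
  qed
  show ?thesis
  proof (rule that[of k e])
    show "finite E" by (rule finE)
    show "\<And>l. l \<in> E \<Longrightarrow> k l \<ge> 1" using kpos ER by auto
    show "\<And>l v. l \<in> E \<Longrightarrow> peval ([:-l,1:]^k l) (peval (e l) v) = 0"
      using D3 ER unfolding q_def by auto
    show "\<And>l \<mu> w. l \<in> E \<Longrightarrow> \<mu> \<in> E \<Longrightarrow> \<mu> \<noteq> l \<Longrightarrow> peval ([:-l,1:]^k l) w = 0 \<Longrightarrow> peval (e \<mu>) w = 0"
      using D4 ER unfolding q_def by blast
    show "\<And>l w. l \<in> E \<Longrightarrow> peval ([:-l,1:]^k l) w = 0 \<Longrightarrow> peval (e l) w = w"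
      using D5 ER unfolding q_def by blast
    show "\<And>v. (\<Sum>l\<in>E. peval (e l) v) = v" by (rule sumE)
  qed
qed


lemma main:
  shows "\<exists>(M :: 'k \<Rightarrow> 'k poly mat set) (f :: ('k \<Rightarrow> 'k poly mat) \<Rightarrow> 'v \<Rightarrow> 'v).
    (\<forall>\<mu>\<in>eigenvalues scale \<phi>. mat_poly_subalgebra (geom_mult scale \<phi> \<mu>) (M \<mu>)) \<and>
    (\<forall>g\<in>(\<Pi>\<^sub>E \<mu>\<in>eigenvalues scale \<phi>. M \<mu>). \<forall>h\<in>(\<Pi>\<^sub>E \<mu>\<in>eigenvalues scale \<phi>. M \<mu>).
        f (\<lambda>\<mu>\<in>eigenvalues scale \<phi>. g \<mu> + h \<mu>) = (\<lambda>v. f g v + f h v) \<and>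
        f (\<lambda>\<mu>\<in>eigenvalues scale \<phi>. g \<mu> * h \<mu>) = f g \<circ> f h) \<and>
    (\<forall>c. \<forall>g\<in>(\<Pi>\<^sub>E \<mu>\<in>eigenvalues scale \<phi>. M \<mu>).
        f (\<lambda>\<mu>\<in>eigenvalues scale \<phi>. [:c:] \<cdot>\<^sub>m g \<mu>) = (\<lambda>v. scale c (f g v))) \<and>
    f (\<lambda>\<mu>\<in>eigenvalues scale \<phi>. 1\<^sub>m (geom_mult scale \<phi> \<mu>)) = id \<and>
    f ` (\<Pi>\<^sub>E \<mu>\<in>eigenvalues scale \<phi>. M \<mu>) = centralizer scale \<phi>"
proof -
  have Eeq: "eigenvalues scale \<phi> = E" by (simp add: eigenvalues_def)
  define m where "m = geom_mult scale \<phi>"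
  have m_eq: "m l = dim {v. \<phi> v - l *s v = 0}" for l by (simp add: m_def geom_mult_def)
  define CC where "CC = {\<psi>. Vector_Spaces.linear scale scale \<psi> \<and> \<psi> \<circ> \<phi> = \<phi> \<circ> \<psi>}"
  have Ceq: "centralizer scale \<phi> = CC" by (simp add: centralizer_def CC_def)
  obtain k e where
    finE: "finite E" and
    kpos: "\<And>l. l \<in> E \<Longrightarrow> k l \<ge> 1" and
    D3: "\<And>l v. l \<in> E \<Longrightarrow> peval ([:-l,1:]^k l) (peval (e l) v) = 0" and
    D4: "\<And>l \<mu> w. l \<in> E \<Longrightarrow> \<mu> \<in> E \<Longrightarrow> \<mu> \<noteq> l \<Longrightarrow> peval ([:-l,1:]^k l) w = 0 \<Longrightarrow> peval (e \<mu>) w = 0" and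
    D5: "\<And>l w. l \<in> E \<Longrightarrow> peval ([:-l,1:]^k l) w = 0 \<Longrightarrow> peval (e l) w = w" and
    D6: "\<And>v. (\<Sum>l\<in>E. peval (e l) v) = v"
    by (rule decomp) blast
  define W where "W l = {w. peval ([:-l,1:]^k l) w = 0}" for l
  have "\<exists>ul. length ul = m l \<and> set ul \<subseteq> W l \<and> (\<forall>w\<in>W l. \<exists>c. w = (\<Sum>j<m l. peval (c j) (ul ! j)))"
    if lE: "l \<in> E" for l
  proof -
    obtain ul where "length ul = dim {v. \<phi> v - l *s v = 0}" "set ul \<subseteq> {w. peval ([:-l,1:]^k l) w = 0}"
      "\<And>w. w \<in> {w. peval ([:-l,1:]^k l) w = 0} \<Longrightarrow> \<exists>c. w = (\<Sum>j<dim {v. \<phi> v - l *s v = 0}. peval (c j) (ul ! j))"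
      using generators[OF kpos[OF lE]] by blast
    then show ?thesis unfolding W_def m_eq by blast
  qed
  then obtain u where u: "\<And>l. l \<in> E \<Longrightarrow> length (u l) = m l \<and> set (u l) \<subseteq> W l \<and>
      (\<forall>w\<in>W l. \<exists>c. w = (\<Sum>j<m l. peval (c j) (u l ! j)))"
    by metis
  define G where "G l = Gam (u l) (m l)" for l
  have gen: "\<exists>x\<in>carrier_vec (m l). G l x = w" if lE: "l \<in> E" and wW: "w \<in> W l" for l w
  proof -
    obtain c where c: "w = (\<Sum>j<m l. peval (c j) (u l ! j))" using u[OF lE] wW by blast
    have "G l (vec (m l) c) = w" unfolding c G_def Gam_def by (intro sum.cong) auto
    then show ?thesis by (intro bexI[of _ "vec (m l) c"]) auto
  qed
  have uW: "u l ! j \<in> W l" if "l \<in> E" "j < m l" for l j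
    using u[OF that(1)] that(2) by (metis nth_mem subsetD)
  have CC_W: "\<psi> w \<in> W l" if "\<psi> \<in> CC" "w \<in> W l" for \<psi> w l
    using that peval_commute[of \<psi> "[:-l,1:]^k l" w] lin_0[of \<psi>] by (auto simp: CC_def W_def)
  have eW: "peval (e l) v \<in> W l" if "l \<in> E" for l v
    using D3[OF that] by (simp add: W_def)
  have CC_lin: "Vector_Spaces.linear scale scale \<psi>" if "\<psi> \<in> CC" for \<psi> using that by (simp add: CC_def)
  have CC_comm: "\<psi> (\<phi> v) = \<phi> (\<psi> v)" if "\<psi> \<in> CC" for \<psi> v
    using that by (auto simp: CC_def fun_eq_iff)
  have CC_I: "\<psi> \<in> CC" if "\<And>x y. \<psi> (x + y) = \<psi> x + \<psi> y" "\<And>c x. \<psi> (c *s x) = c *s \<psi> x"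
     "\<And>v. \<psi> (\<phi> v) = \<phi> (\<psi> v)" for \<psi>
    using that unfolding CC_def by (auto intro!: linI)
  define Sp where "Sp l A \<psi> \<longleftrightarrow> (\<forall>x\<in>carrier_vec (m l). G l (A *\<^sub>v x) = \<psi> (G l x))" for l A \<psi>
  define S where "S l = {A \<in> carrier_mat (m l) (m l). \<exists>\<psi>\<in>CC. Sp l A \<psi>}" for l
  define Psi where "Psi l A = (SOME \<psi>. \<psi> \<in> CC \<and> Sp l A \<psi>)" for l A
  have Psi: "Psi l A \<in> CC \<and> Sp l A (Psi l A)" if "A \<in> S l" for l A
  proof -
    have "\<exists>\<psi>. \<psi> \<in> CC \<and> Sp l A \<psi>" using that by (auto simp: S_def)
    then show ?thesis unfolding Psi_def by (rule someI_ex)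
  qed
  have PsiW: "Psi l A w = \<psi> w" if H: "l \<in> E" "A \<in> S l" "Sp l A \<psi>" "w \<in> W l" for l A \<psi> w
  proof -
    obtain x where x: "x \<in> carrier_vec (m l)" "G l x = w" using gen[OF H(1,4)] by blast
    have "Psi l A w = G l (A *\<^sub>v x)" using Psi[OF H(2)] x by (auto simp: Sp_def)
    also have "\<dots> = \<psi> w" using H(3) x by (auto simp: Sp_def)
    finally show ?thesis .
  qed
  have SC: "A \<in> carrier_mat (m l) (m l)" if "A \<in> S l" for l A using that by (simp add: S_def)
  have S1: "1\<^sub>m (m l) \<in> S l \<and> Sp l (1\<^sub>m (m l)) id" for l
  proof -
    have "id \<in> CC" by (rule CC_I) auto
    moreover have "Sp l (1\<^sub>m (m l)) id" by (simp add: Sp_def)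
    ultimately show ?thesis by (auto simp: S_def)
  qed
  have Sadd: "A + B \<in> S l \<and> Sp l (A + B) (\<lambda>v. Psi l A v + Psi l B v)" if "A \<in> S l" "B \<in> S l" for l A B
  proof -
    have PA: "Psi l A \<in> CC" "Sp l A (Psi l A)" and PB: "Psi l B \<in> CC" "Sp l B (Psi l B)"
      using Psi that by auto
    have "(\<lambda>v. Psi l A v + Psi l B v) \<in> CC"
      using CC_lin[OF PA(1)] CC_lin[OF PB(1)] CC_comm[OF PA(1)] CC_comm[OF PB(1)]
      by (intro CC_I) (auto simp: lin_add lin_scale phi_add scale_right_distrib ac_simps)
    moreover have "Sp l (A + B) (\<lambda>v. Psi l A v + Psi l B v)"
      unfolding Sp_def
    proof
      fix x :: "'k poly vec" assume x: "x \<in> carrier_vec (m l)"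
      have "(A + B) *\<^sub>v x = A *\<^sub>v x + B *\<^sub>v x"
        using SC[OF that(1)] SC[OF that(2)] x by (rule add_mult_distrib_mat_vec)
      then show "G l ((A + B) *\<^sub>v x) = Psi l A (G l x) + Psi l B (G l x)"
        using PA(2) PB(2) x SC[OF that(1)] SC[OF that(2)] unfolding Sp_def G_def
        by (simp add: Gam_add)
    qed
    moreover have "A + B \<in> carrier_mat (m l) (m l)" using SC that by auto
    ultimately show ?thesis by (auto simp: S_def)
  qed
  have Smult: "A * B \<in> S l \<and> Sp l (A * B) (Psi l A \<circ> Psi l B)" if "A \<in> S l" "B \<in> S l" for l A B
  proof -
    have PA: "Psi l A \<in> CC" "Sp l A (Psi l A)" and PB: "Psi l B \<in> CC" "Sp l B (Psi l B)"
      using Psi that by auto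
    have "Psi l A \<circ> Psi l B \<in> CC"
      using CC_lin[OF PA(1)] CC_lin[OF PB(1)] CC_comm[OF PA(1)] CC_comm[OF PB(1)]
      by (intro CC_I) (auto simp: lin_add lin_scale)
    moreover have "Sp l (A * B) (Psi l A \<circ> Psi l B)"
      unfolding Sp_def
    proof
      fix x :: "'k poly vec" assume x: "x \<in> carrier_vec (m l)"
      have "(A * B) *\<^sub>v x = A *\<^sub>v (B *\<^sub>v x)"
        using SC[OF that(1)] SC[OF that(2)] x by (rule assoc_mult_mat_vec)
      moreover have "B *\<^sub>v x \<in> carrier_vec (m l)" using SC[OF that(2)] x by simp
      ultimately show "G l ((A * B) *\<^sub>v x) = (Psi l A \<circ> Psi l B) (G l x)"
        using PA(2) PB(2) x unfolding Sp_def by simp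
    qed
    moreover have "A * B \<in> carrier_mat (m l) (m l)" using SC that by (meson mult_carrier_mat)
    ultimately show ?thesis by (auto simp: S_def)
  qed
  have Ssmult: "[:c:] \<cdot>\<^sub>m A \<in> S l \<and> Sp l ([:c:] \<cdot>\<^sub>m A) (\<lambda>v. c *s Psi l A v)" if "A \<in> S l" for l A c
  proof -
    have PA: "Psi l A \<in> CC" "Sp l A (Psi l A)" using Psi that by auto
    have "(\<lambda>v. c *s Psi l A v) \<in> CC"
      using CC_lin[OF PA(1)] CC_comm[OF PA(1)]
      by (intro CC_I) (auto simp: lin_add lin_scale phi_scale scale_right_distrib mult.commute)
    moreover have "Sp l ([:c:] \<cdot>\<^sub>m A) (\<lambda>v. c *s Psi l A v)"
      unfolding Sp_def
    proof
      fix x :: "'k poly vec" assume x: "x \<in> carrier_vec (m l)"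
      have A: "A \<in> carrier_mat (m l) (m l)" using SC[OF that] .
      have "G l (([:c:] \<cdot>\<^sub>m A) *\<^sub>v x) = (\<Sum>k<m l. peval (x $ k) (G l (col ([:c:] \<cdot>\<^sub>m A) k)))"
        unfolding G_def using A x by (intro Gam_col) auto
      also have "\<dots> = (\<Sum>k<m l. peval (x $ k) (c *s G l (col A k)))"
        using A by (intro sum.cong) (auto simp: G_def Gam_smult)
      also have "\<dots> = c *s (\<Sum>k<m l. peval (x $ k) (G l (col A k)))"
        by (simp add: peval_vscale scale_sum_right)
      also have "\<dots> = c *s G l (A *\<^sub>v x)"
        unfolding G_def using A x by (simp add: Gam_col)
      also have "\<dots> = c *s Psi l A (G l x)" using PA(2) x by (simp add: Sp_def)
      finally show "G l (([:c:] \<cdot>\<^sub>m A) *\<^sub>v x) = c *s Psi l A (G l x)" .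
    qed
    moreover have "[:c:] \<cdot>\<^sub>m A \<in> carrier_mat (m l) (m l)" using SC[OF that] by simp
    ultimately show ?thesis by (auto simp: S_def)
  qed
  define f where "f g v = (\<Sum>l\<in>E. Psi l (g l) (peval (e l) v))" for g v
  have PiS: "g l \<in> S l" if "g \<in> (\<Pi>\<^sub>E \<mu>\<in>E. S \<mu>)" "l \<in> E" for g l
    using that by (auto simp: PiE_def Pi_def)
  have proj: "peval (e l) (Psi \<mu> B (peval (e \<mu>) v)) = (if \<mu> = l then Psi l B (peval (e l) v) else 0)"
    if "l \<in> E" "\<mu> \<in> E" "B \<in> S \<mu>" for l \<mu> B v
  proof -
    have "Psi \<mu> B (peval (e \<mu>) v) \<in> W \<mu>"
      using CC_W[OF conjunct1[OF Psi[OF that(3)]] eW[OF that(2)]] .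
    then show ?thesis
      using D4[OF that(2,1)] D5[OF that(2)] unfolding W_def by auto
  qed
  show ?thesis
    unfolding Eeq m_def[symmetric] Ceq
  proof (intro exI[of _ S] exI[of _ f] conjI ballI allI)
    fix l assume l: "l \<in> E"
    show "mat_poly_subalgebra (m l) (S l)"
      unfolding mat_poly_subalgebra_def using SC S1 Sadd Smult Ssmult by blast
  next
    fix g h assume g: "g \<in> (\<Pi>\<^sub>E \<mu>\<in>E. S \<mu>)" and h: "h \<in> (\<Pi>\<^sub>E \<mu>\<in>E. S \<mu>)"
    show "f (\<lambda>\<mu>\<in>E. g \<mu> + h \<mu>) = (\<lambda>v. f g v + f h v)"
    proof
      fix v
      have "Psi l (g l + h l) (peval (e l) v) = Psi l (g l) (peval (e l) v) + Psi l (h l) (peval (e l) v)"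
        if "l \<in> E" for l
        using PsiW[OF that _ _ eW[OF that]] Sadd[OF PiS[OF g that] PiS[OF h that]] by blast
      then show "f (\<lambda>\<mu>\<in>E. g \<mu> + h \<mu>) v = f g v + f h v"
        unfolding f_def by (simp add: sum.distrib)
    qed
    show "f (\<lambda>\<mu>\<in>E. g \<mu> * h \<mu>) = f g \<circ> f h"
    proof
      fix v
      have inner: "peval (e l) (f h v) = Psi l (h l) (peval (e l) v)" if l: "l \<in> E" for l
      proof -
        have "peval (e l) (f h v) = (\<Sum>\<mu>\<in>E. peval (e l) (Psi \<mu> (h \<mu>) (peval (e \<mu>) v)))"
          unfolding f_def by (rule peval_vsum)
        also have "\<dots> = (\<Sum>\<mu>\<in>E. if \<mu> = l then Psi l (h l) (peval (e l) v) else 0)"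
          using proj[OF l _ PiS[OF h]] by (intro sum.cong) auto
        also have "\<dots> = Psi l (h l) (peval (e l) v)" using finE l by simp
        finally show ?thesis .
      qed
      have "Psi l (g l * h l) (peval (e l) v) = Psi l (g l) (Psi l (h l) (peval (e l) v))"
        if "l \<in> E" for l
        using PsiW[OF that _ _ eW[OF that]] Smult[OF PiS[OF g that] PiS[OF h that]] by auto
      then have "f (\<lambda>\<mu>\<in>E. g \<mu> * h \<mu>) v = (\<Sum>l\<in>E. Psi l (g l) (Psi l (h l) (peval (e l) v)))"
        unfolding f_def by (intro sum.cong) auto
      also have "\<dots> = f g (f h v)"
        unfolding f_def[of g] using inner by (intro sum.cong) auto
      finally show "f (\<lambda>\<mu>\<in>E. g \<mu> * h \<mu>) v = (f g \<circ> f h) v" by simp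
    qed
  next
    fix c g assume g: "g \<in> (\<Pi>\<^sub>E \<mu>\<in>E. S \<mu>)"
    show "f (\<lambda>\<mu>\<in>E. [:c:] \<cdot>\<^sub>m g \<mu>) = (\<lambda>v. c *s f g v)"
    proof
      fix v
      have "Psi l ([:c:] \<cdot>\<^sub>m g l) (peval (e l) v) = c *s Psi l (g l) (peval (e l) v)"
        if "l \<in> E" for l
        using PsiW[OF that _ _ eW[OF that]] Ssmult[OF PiS[OF g that]] by blast
      then show "f (\<lambda>\<mu>\<in>E. [:c:] \<cdot>\<^sub>m g \<mu>) v = c *s f g v"
        unfolding f_def by (simp add: scale_sum_right)
    qed
  next
    show "f (\<lambda>\<mu>\<in>E. 1\<^sub>m (m \<mu>)) = id"
    proof
      fix v
      have "Psi l (1\<^sub>m (m l)) (peval (e l) v) = peval (e l) v" if "l \<in> E" for l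
        using PsiW[OF that _ _ eW[OF that]] S1[of l] by auto
      then show "f (\<lambda>\<mu>\<in>E. 1\<^sub>m (m \<mu>)) v = id v"
        unfolding f_def using D6[of v] by simp
    qed
  next
    show "f ` (\<Pi>\<^sub>E \<mu>\<in>E. S \<mu>) = CC"
    proof
      show "f ` (\<Pi>\<^sub>E \<mu>\<in>E. S \<mu>) \<subseteq> CC"
      proof
        fix \<psi> assume "\<psi> \<in> f ` (\<Pi>\<^sub>E \<mu>\<in>E. S \<mu>)"
        then obtain g where g: "g \<in> (\<Pi>\<^sub>E \<mu>\<in>E. S \<mu>)" "\<psi> = f g" by auto
        have P: "Psi l (g l) \<in> CC" if "l \<in> E" for l using Psi[OF PiS[OF g(1) that]] by blast
        show "\<psi> \<in> CC" unfolding g(2)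
        proof (rule CC_I)
          fix x y show "f g (x + y) = f g x + f g y"
            unfolding f_def using P by (simp add: peval_vadd lin_add[OF CC_lin] sum.distrib)
        next
          fix c x show "f g (c *s x) = c *s f g x"
            unfolding f_def using P by (simp add: peval_vscale lin_scale[OF CC_lin] scale_sum_right)
        next
          fix v
          have "peval (e l) (\<phi> v) = \<phi> (peval (e l) v)" for l
            using peval_commute[OF lin refl] .
          then show "f g (\<phi> v) = \<phi> (f g v)"
            unfolding f_def using P by (simp add: CC_comm phi_sum)
        qed
      qed
    next
      show "CC \<subseteq> f ` (\<Pi>\<^sub>E \<mu>\<in>E. S \<mu>)"
      proof
        fix \<psi> assume \<psi>: "\<psi> \<in> CC"
        have "\<exists>x\<in>carrier_vec (m l). G l x = \<psi> (u l ! j)" if "l \<in> E" "j < m l" for l j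
          using gen[OF that(1) CC_W[OF \<psi> uW[OF that]]] .
        then obtain X where X: "\<And>l j. l \<in> E \<Longrightarrow> j < m l \<Longrightarrow> X l j \<in> carrier_vec (m l) \<and> G l (X l j) = \<psi> (u l ! j)"
          by metis
        define A where "A l = mat (m l) (m l) (\<lambda>(i, j). X l j $ i)" for l
        have colA: "col (A l) j = X l j" if "l \<in> E" "j < m l" for l j
          using X[OF that] that by (auto simp: A_def)
        have AS: "A l \<in> S l \<and> Sp l (A l) \<psi>" if l: "l \<in> E" for l
        proof -
          have Ac: "A l \<in> carrier_mat (m l) (m l)" by (simp add: A_def)
          have "Sp l (A l) \<psi>"
            unfolding Sp_def
          proof
            fix x :: "'k poly vec" assume x: "x \<in> carrier_vec (m l)"
            have "G l (A l *\<^sub>v x) = (\<Sum>k<m l. peval (x $ k) (G l (col (A l) k)))"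
              unfolding G_def using Ac x by (rule Gam_col)
            also have "\<dots> = (\<Sum>k<m l. peval (x $ k) (\<psi> (u l ! k)))"
              using colA[OF l] X[OF l] by (intro sum.cong) auto
            also have "\<dots> = \<psi> (G l x)"
              unfolding G_def using \<psi> by (simp add: Gam_commute CC_def)
            finally show "G l (A l *\<^sub>v x) = \<psi> (G l x)" .
          qed
          then show ?thesis using Ac \<psi> by (auto simp: S_def)
        qed
        define g where "g = (\<lambda>\<mu>\<in>E. A \<mu>)"
        have gP: "g \<in> (\<Pi>\<^sub>E \<mu>\<in>E. S \<mu>)" using AS by (auto simp: g_def)
        have "f g = \<psi>"
        proof
          fix v
          have "Psi l (g l) (peval (e l) v) = \<psi> (peval (e l) v)" if "l \<in> E" for l
            using PsiW[OF that _ _ eW[OF that]] AS[OF that] that by (auto simp: g_def)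
          then have "f g v = (\<Sum>l\<in>E. \<psi> (peval (e l) v))" unfolding f_def by simp
          also have "\<dots> = \<psi> v" using lin_sum[OF CC_lin[OF \<psi>]] D6[of v] by metis
          finally show "f g v = \<psi> v" .
        qed
        then show "\<psi> \<in> f ` (\<Pi>\<^sub>E \<mu>\<in>E. S \<mu>)" using gP by blast
      qed
    qed
  qed
qed

end


theorem theorem5p2:
  fixes scale :: "'k::alg_closed_field \<Rightarrow> 'v::ab_group_add \<Rightarrow> 'v"
    and \<phi> :: "'v \<Rightarrow> 'v"
  assumes "vector_space scale"
    and "\<exists>B. finite B \<and> module.span scale B = UNIV"
    and "Vector_Spaces.linear scale scale \<phi>"
  shows "\<exists>(M :: 'k \<Rightarrow> 'k poly mat set) (f :: ('k \<Rightarrow> 'k poly mat) \<Rightarrow> 'v \<Rightarrow> 'v).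
    (\<forall>\<mu>\<in>eigenvalues scale \<phi>. mat_poly_subalgebra (geom_mult scale \<phi> \<mu>) (M \<mu>)) \<and>
    (\<forall>g\<in>(\<Pi>\<^sub>E \<mu>\<in>eigenvalues scale \<phi>. M \<mu>). \<forall>h\<in>(\<Pi>\<^sub>E \<mu>\<in>eigenvalues scale \<phi>. M \<mu>).
        f (\<lambda>\<mu>\<in>eigenvalues scale \<phi>. g \<mu> + h \<mu>) = (\<lambda>v. f g v + f h v) \<and>
        f (\<lambda>\<mu>\<in>eigenvalues scale \<phi>. g \<mu> * h \<mu>) = f g \<circ> f h) \<and>
    (\<forall>c. \<forall>g\<in>(\<Pi>\<^sub>E \<mu>\<in>eigenvalues scale \<phi>. M \<mu>).
        f (\<lambda>\<mu>\<in>eigenvalues scale \<phi>. [:c:] \<cdot>\<^sub>m g \<mu>) = (\<lambda>v. scale c (f g v))) \<and>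
    f (\<lambda>\<mu>\<in>eigenvalues scale \<phi>. 1\<^sub>m (geom_mult scale \<phi> \<mu>)) = id \<and>
    f ` (\<Pi>\<^sub>E \<mu>\<in>eigenvalues scale \<phi>. M \<mu>) = centralizer scale \<phi>"
  proof -
  interpret V: vector_space scale by fact
  obtain B where B: "finite B" "V.span B = UNIV" using assms(2) by blast
  obtain B' where B': "B' \<subseteq> B" "V.independent B'" "B \<subseteq> V.span B'"
    by (rule V.maximal_independent_subset)
  have spanB': "V.span B' = UNIV"
    using V.span_minimal[OF B'(3) V.subspace_span] B(2) by auto
  have finB': "finite B'" using finite_subset[OF B'(1) B(1)] .
  interpret ac_endo scale \<phi> B'
    by unfold_locales (use assms(3) finB' B'(2) spanB' in \<open>auto simp: Vector_Spaces.linear_iff\<close>)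
  show ?thesis by (rule main)
qed

end
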